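(* Let $H_n(x)=\frac{n!}{2^n}\sum_{m=0}^{\lfloor n/2\rfloor}\frac{(-1)^m}{m!(n-2m)!}(2x)^{n-2m}$ be the monic Hermite polynomials, and for each $n$ let $a_{n,0},\dots,a_{n,n}$ be the coefficients whose associated polynomial is $P_n=H_n$. Then $a_{n,n}=\dfrac{h_n}{2^n n!}$, where $h_0=1$, $h_1=1$, $h_2=3$ and $h_n=h_{n-1}+2(n-1)h_{n-2}$ for $n\ge2$. Moreover $$h_n=\frac{1}{2\sqrt{\pi}}\int_{-\infty}^{\infty}x^n e^{-(x-1)^2/4}\,dx,$$ i.e. $h_n$ is the $n$-th moment of a Gaussian random variable with mean $1$ and variance $2$.
   Context: $\imath=\sqrt{-1}$. $\mathcal{A}$ denotes the quotient of the free associative $\mathbb{C}$-algebra on two noncommuting generators $p,q$ by the two-sided ideal generated by $qp-pq-\imath$, and $z=\tfrac12(qp+pq)\in\mathcal A$. For $n\ge0$ and complex numbers $a_{n,0},\dots,a_{n,n}$, there is a unique polynomial $P_n\in\mathbb{C}[X]$ of degree at most $n$ with $\sum_{k=0}^n a_{n,k}q^kp^nq^{n-k}=P_n(z)$ in $\mathcal A$; it is called the polynomial associated to $\{a_{n,k}\}$. Since the words $q^kp^nq^{n-k}$, $0\le k\le n$, are linearly independent in $\mathcal A$ with associated polynomials spanning polynomials of degree $\le n$, each polynomial of degree $\le n$ determines the coefficients $a_{n,k}$ uniquely. *)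

theory Defs
  imports "HOL-Analysis.Analysis" "HOL-Library.Poly_Mapping"
    "HOL-Computational_Algebra.Polynomial"
begin

text \<open>Free associative complex algebra on the two noncommuting generators p, q:
  finitely supported complex linear combinations of words over the alphabet {P, Q}.\<close>

datatype gen = P | Q

type_synonym fralg = "gen list \<Rightarrow>\<^sub>0 complex"

definition word :: "gen list \<Rightarrow> fralg" where
  "word w = Poly_Mapping.single w 1"

definition fscale :: "complex \<Rightarrow> fralg \<Rightarrow> fralg" where
  "fscale c f = Poly_Mapping.map (\<lambda>x. c * x) f"

definition fmul :: "fralg \<Rightarrow> fralg \<Rightarrow> fralg" where
  "fmul f g = (\<Sum>u\<in>Poly_Mapping.keys f. \<Sum>v\<in>Poly_Mapping.keys g.
                 Poly_Mapping.single (u @ v) (Poly_Mapping.lookup f u * Poly_Mapping.lookup g v))"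

primrec fpow :: "fralg \<Rightarrow> nat \<Rightarrow> fralg" where
  "fpow x 0 = word []"
| "fpow x (Suc n) = fmul x (fpow x n)"

text \<open>Two-sided ideal generated by qp - pq - i: it is spanned by u (qp - pq - i) v
  for words u, v.\<close>
inductive_set weyl_ideal :: "fralg set" where
  zero: "0 \<in> weyl_ideal"
| add: "x \<in> weyl_ideal \<Longrightarrow> y \<in> weyl_ideal \<Longrightarrow> x + y \<in> weyl_ideal"
| gen: "fscale c (word (u @ [Q, P] @ v) - word (u @ [P, Q] @ v) - fscale \<i> (word (u @ v)))
          \<in> weyl_ideal"

definition weyl_eq :: "fralg \<Rightarrow> fralg \<Rightarrow> bool" where
  "weyl_eq x y \<longleftrightarrow> x - y \<in> weyl_ideal"

definition weyl_z :: fralg where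
  "weyl_z = fscale (1/2) (word [Q, P] + word [P, Q])"

definition peval :: "complex poly \<Rightarrow> fralg \<Rightarrow> fralg" where
  "peval p x = (\<Sum>j\<le>degree p. fscale (coeff p j) (fpow x j))"

definition hermite :: "nat \<Rightarrow> complex poly" where
  "hermite n = (\<Sum>m\<le>n div 2.
     monom (fact n / 2 ^ n * (-1) ^ m / (fact m * fact (n - 2 * m)) * 2 ^ (n - 2 * m))
           (n - 2 * m))"

fun hseq :: "nat \<Rightarrow> nat" where
  "hseq 0 = 1"
| "hseq (Suc 0) = 1"
| "hseq (Suc (Suc n)) = hseq (Suc n) + 2 * (Suc n) * hseq n"

end

theory Submission
  imports Defs "HOL-Probability.Distributions"
begin


lemma lookup_fscale: "Poly_Mapping.lookup (fscale c x) w = c * Poly_Mapping.lookup x w"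
  unfolding fscale_def by (simp add: Poly_Mapping.map.rep_eq when_def)

lemma keys_fscale: "Poly_Mapping.keys (fscale c x) \<subseteq> Poly_Mapping.keys x"
  by (auto simp: in_keys_iff lookup_fscale)

lemma smult_sum2: "smult c (\<Sum>i\<in>I. g i) = (\<Sum>i\<in>I. smult c (g i))"
  by (induction I rule: infinite_finite_induct) (auto simp: smult_add_right)

primrec act :: "gen list \<Rightarrow> complex poly \<Rightarrow> complex poly" where
  "act [] f = f"
| "act (g # w) f = (case g of P \<Rightarrow> [:0,1:] * act w f | Q \<Rightarrow> smult \<i> (pderiv (act w f)))"

lemma act_append: "act (u @ v) f = act u (act v f)"
  by (induction u) (auto split: gen.split)

lemma act_add: "act w (f + g) = act w f + act w g"
  by (induction w) (auto split: gen.split simp: pderiv_add algebra_simps smult_add_right)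

lemma act_smult: "act w (smult c f) = smult c (act w f)"
  by (induction w) (auto split: gen.split simp: pderiv_smult algebra_simps)

lemma act_zero: "act w 0 = 0"
  using act_smult[of w 0 0] by simp

lemma act_minus: "act w (f - g) = act w f - act w g"
  using act_add[of w "f - g" g] by simp

lemma act_sum: "act w (\<Sum>i\<in>I. g i) = (\<Sum>i\<in>I. act w (g i))"
  by (induction I rule: infinite_finite_induct) (auto simp: act_zero act_add)

lemma act_comm: "act [Q,P] f - act [P,Q] f - smult \<i> f = 0"
  by (simp add: pderiv_mult pderiv_pCons algebra_simps smult_add_right)

definition Psi :: "fralg \<Rightarrow> complex poly \<Rightarrow> complex poly" where
  "Psi x f = (\<Sum>w\<in>Poly_Mapping.keys x. smult (Poly_Mapping.lookup x w) (act w f))"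

lemma Psi_sup: assumes "finite S" "Poly_Mapping.keys x \<subseteq> S"
  shows "Psi x f = (\<Sum>w\<in>S. smult (Poly_Mapping.lookup x w) (act w f))"
  unfolding Psi_def by (rule sum.mono_neutral_left) (use assms in \<open>auto simp: in_keys_iff\<close>)

lemma Psi_add: "Psi (x + y) f = Psi x f + Psi y f"
proof -
  let ?S = "Poly_Mapping.keys x \<union> Poly_Mapping.keys y"
  have "Psi (x+y) f = (\<Sum>w\<in>?S. smult (Poly_Mapping.lookup (x+y) w) (act w f))"
    by (rule Psi_sup) (use keys_add[of x y] in auto)
  also have "\<dots> = (\<Sum>w\<in>?S. smult (Poly_Mapping.lookup x w) (act w f)) + (\<Sum>w\<in>?S. smult (Poly_Mapping.lookup y w) (act w f))"
    by (simp add: lookup_add smult_add_left sum.distrib)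
  also have "\<dots> = Psi x f + Psi y f"
    by (subst (1 2) Psi_sup[symmetric]) auto
  finally show ?thesis .
qed

lemma Psi_fscale: "Psi (fscale c x) f = smult c (Psi x f)"
proof -
  have "Psi (fscale c x) f = (\<Sum>w\<in>Poly_Mapping.keys x. smult (Poly_Mapping.lookup (fscale c x) w) (act w f))"
    by (rule Psi_sup) (auto simp: keys_fscale[THEN subsetD])
  then show ?thesis by (simp add: Psi_def lookup_fscale smult_sum2)
qed

lemma Psi_zero: "Psi 0 f = 0"
  by (simp add: Psi_def)

lemma Psi_diff: "Psi (x - y) f = Psi x f - Psi y f"
  using Psi_add[of "x - y" y f] by simp

lemma Psi_sum: "Psi (\<Sum>i\<in>I. g i) f = (\<Sum>i\<in>I. Psi (g i) f)"
  by (induction I rule: infinite_finite_induct) (auto simp: Psi_zero Psi_add)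

lemma Psi_single: "Psi (Poly_Mapping.single w c) f = smult c (act w f)"
  by (simp add: Psi_def)

lemma Psi_word: "Psi (word w) f = act w f"
  by (simp add: word_def Psi_single)

lemma Psi_f_add: "Psi x (f + g) = Psi x f + Psi x g"
  by (simp add: Psi_def act_add smult_add_right sum.distrib)

lemma Psi_f_smult: "Psi x (smult c f) = smult c (Psi x f)"
  by (simp add: Psi_def act_smult smult_sum2 mult.commute)

lemma Psi_f_zero: "Psi x 0 = 0"
  by (simp add: Psi_def act_zero)

lemma Psi_f_sum: "Psi x (\<Sum>i\<in>I. g i) = (\<Sum>i\<in>I. Psi x (g i))"
  by (induction I rule: infinite_finite_induct) (auto simp: Psi_f_zero Psi_f_add)

lemma Psi_fmul: "Psi (fmul x y) f = Psi x (Psi y f)"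
proof -
  have "Psi (fmul x y) f = (\<Sum>u\<in>Poly_Mapping.keys x. \<Sum>v\<in>Poly_Mapping.keys y.
      smult (Poly_Mapping.lookup x u * Poly_Mapping.lookup y v) (act u (act v f)))"
    by (simp add: fmul_def Psi_sum Psi_single act_append)
  also have "\<dots> = Psi x (Psi y f)"
    by (simp add: Psi_def act_sum act_smult smult_sum2)
  finally show ?thesis .
qed

lemma Psi_ideal: "x \<in> weyl_ideal \<Longrightarrow> Psi x f = 0"
proof (induction rule: weyl_ideal.induct)
  case zero then show ?case by (simp add: Psi_zero)
next
  case (add x y) then show ?case by (simp add: Psi_add)
next
  case (gen c u v)
  have "act u (act [Q,P] (act v f) - act [P,Q] (act v f) - smult \<i> (act v f)) = 0"
    by (simp only: act_comm act_zero)
  then show ?case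
    by (simp add: Psi_fscale Psi_diff Psi_word act_append act_minus act_smult)
qed



lemma act_repQ_1: "act (replicate j Q) 1 = (if j = 0 then 1 else 0)"
  by (induction j) auto

lemma act_repP_1: "act (replicate j P) 1 = monom 1 j"
  by (induction j) (auto simp: monom_Suc)

lemma act_repQ_monom: "j \<le> m \<Longrightarrow>
  act (replicate j Q) (monom 1 m) = smult (\<i>^j * fact m / fact (m - j)) (monom 1 (m - j))"
proof (induction j)
  case 0 then show ?case by simp
next
  case (Suc j)
  have f: "fact (m - j) = of_nat (m - j) * (fact (m - Suc j) :: complex)"
    using Suc.prems by (metis Suc_diff_Suc Suc_le_lessD fact_Suc)
  have "(m - Suc j) = m - j - 1" by simp
  show ?case using Suc
    by (simp add: pderiv_smult pderiv_monom smult_monom f field_simps)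
qed

lemma Psi_z_1: "Psi weyl_z 1 = [:\<i>/2:]"
  by (simp add: weyl_z_def Psi_fscale Psi_add Psi_word pderiv_pCons)

lemma Psi_fpow_z: "Psi (fpow weyl_z j) 1 = [:(\<i>/2)^j:]"
proof (induction j)
  case 0 then show ?case by (simp add: Psi_word)
next
  case (Suc j)
  have "Psi (fpow weyl_z (Suc j)) 1 = Psi weyl_z (smult ((\<i>/2)^j) 1)"
    by (simp add: Psi_fmul Suc)
  also have "\<dots> = [:(\<i>/2)^Suc j:]"
    using Psi_f_smult[of weyl_z "(\<i>/2)^j" 1] by (simp add: Psi_z_1)
  finally show ?case .
qed

lemma sum_const_poly: "(\<Sum>i\<in>I. [:g i:]) = [:\<Sum>i\<in>I. g i:]"
  by (induction I rule: infinite_finite_induct) auto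

lemma Psi_peval: "Psi (peval p weyl_z) 1 = [:poly p (\<i>/2):]"
  by (simp add: peval_def Psi_sum Psi_fscale Psi_fpow_z poly_altdef sum_const_poly)



definition G :: "nat \<Rightarrow> real" where
  "G n = (\<Sum>m\<le>n div 2. fact n / (fact m * fact (n - 2 * m)))"

lemma act_word_k: "k \<le> n \<Longrightarrow>
  act (replicate k Q @ replicate n P @ replicate (n - k) Q) 1 = (if k = n then [:\<i>^n * fact n:] else 0)"
  by (auto simp: act_append act_repQ_1 act_zero act_repP_1 act_repQ_monom)

lemma main_alg:
  assumes "weyl_eq
     (\<Sum>k\<le>n. fscale (a k) (word (replicate k Q @ replicate n P @ replicate (n - k) Q)))
     (peval p weyl_z)"
  shows "a n * \<i>^n * fact n = poly p (\<i>/2)"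
proof -
  let ?L = "(\<Sum>k\<le>n. fscale (a k) (word (replicate k Q @ replicate n P @ replicate (n - k) Q)))"
  have "Psi (?L - peval p weyl_z) 1 = 0"
    using assms unfolding weyl_eq_def by (rule Psi_ideal)
  hence "Psi ?L 1 = [:poly p (\<i>/2):]" by (simp add: Psi_diff Psi_peval)
  moreover have "Psi ?L 1 = (\<Sum>k\<le>n. if k = n then [:a n * \<i>^n * fact n:] else 0)"
    unfolding Psi_sum Psi_fscale Psi_word by (rule sum.cong) (auto simp: act_word_k)
  ultimately show ?thesis by simp
qed

lemma i_pow: "2 * m \<le> n \<Longrightarrow> (-1) ^ m * \<i> ^ (n - 2 * m) = \<i> ^ n"
proof -
  assume h: "2 * m \<le> n"
  have "\<i> ^ n = \<i> ^ (n - 2 * m) * \<i> ^ (2 * m)" using h by (metis le_add_diff_inverse2 power_add)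
  also have "\<i> ^ (2 * m) = (-1) ^ m" by (simp add: power_mult)
  finally show ?thesis by (metis mult.commute)
qed

lemma poly_hermite: "poly (hermite n) (\<i>/2) = \<i>^n / 2^n * of_real (G n)"
proof -
  have "poly (hermite n) (\<i>/2) = (\<Sum>m\<le>n div 2. \<i>^n / 2^n * of_real (fact n / (fact m * fact (n - 2 * m))))"
    unfolding hermite_def poly_sum poly_monom
  proof (rule sum.cong[OF refl])
    fix m assume "m \<in> {..n div 2}"
    hence h: "2 * m \<le> n" by auto
    have "(fact n / 2 ^ n * (-1) ^ m / (fact m * fact (n - 2 * m)) * 2 ^ (n - 2 * m)) * (\<i> / 2) ^ (n - 2 * m)
       = fact n / 2 ^ n / (fact m * fact (n - 2 * m)) * ((-1) ^ m * \<i> ^ (n - 2 * m)) * ((2::complex) ^ (n - 2 * m) / 2 ^ (n - 2 * m))"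
      by (simp add: power_divide field_simps)
    also have "\<dots> = \<i>^n / 2^n * of_real (fact n / (fact m * fact (n - 2 * m)))"
      using h by (simp only: i_pow) (simp add: field_simps)
    finally show "(fact n / 2 ^ n * (-1) ^ m / (fact m * fact (n - 2 * m)) * 2 ^ (n - 2 * m)) * (\<i> / 2) ^ (n - 2 * m)
       = \<i>^n / 2^n * of_real (fact n / (fact m * fact (n - 2 * m)))" .
  qed
  also have "\<dots> = \<i>^n / 2^n * of_real (G n)"
    by (simp add: G_def sum_distrib_left)
  finally show ?thesis .
qed

lemma a_n_G:
  assumes "weyl_eq
     (\<Sum>k\<le>n. fscale (a k) (word (replicate k Q @ replicate n P @ replicate (n - k) Q)))
     (peval (hermite n) weyl_z)"
  shows "a n = of_real (G n) / (2 ^ n * fact n)"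
proof -
  have "a n * \<i>^n * fact n = \<i>^n / 2^n * of_real (G n)"
    using main_alg[OF assms] poly_hermite by simp
  then show ?thesis by (simp add: field_simps)
qed



definition T :: "nat \<Rightarrow> nat \<Rightarrow> real" where
  "T n m = (if 2 * m \<le> n then fact n / (fact m * fact (n - 2 * m)) else 0)"

lemma T_rec: "T (Suc (Suc n)) (Suc m) = T (Suc n) (Suc m) + 2 * real (Suc n) * T n m"
proof (cases "2 * m + 1 \<le> n")
  case True
  then obtain j where j: "n = 2 * m + 1 + j" using le_Suc_ex by blast
  have e1: "Suc (Suc n) - 2 * Suc m = Suc j" "Suc n - 2 * Suc m = j" "n - 2 * m = Suc j"
    using j by auto
  have f1: "fact (Suc (Suc n)) = real (n+2) * real (n+1) * fact n" "fact (Suc n) = real (n+1) * (fact n :: real)"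
    "fact (Suc m) = real (m+1) * (fact m :: real)" "fact (Suc j) = real (j+1) * (fact j :: real)"
    by (simp_all add: fact_Suc algebra_simps)
  have rn: "real n = 2 * real m + 1 + real j" using j by simp
  have pos: "(fact n :: real) > 0" "(fact m :: real) > 0" "(fact j :: real) > 0" by auto
  have c: "2 * Suc m \<le> Suc (Suc n)" "2 * Suc m \<le> Suc n" "2 * m \<le> n" using True by auto
  have key: "real (n+2) * real (n+1) * fact n / (real (m+1) * fact m * (real (j+1) * fact j))
     = real (n+1) * fact n / (real (m+1) * fact m * fact j) + 2 * real (Suc n) * (fact n / (fact m * (real (j+1) * fact j)))"
    using pos by (simp add: divide_simps rn) (simp add: algebra_simps)
  show ?thesis unfolding T_def
    by (simp only: c if_True e1 f1 key)
next
  case False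
  show ?thesis
  proof (cases "n = 2 * m")
    case True
    have pm: "(fact m :: real) > 0" by simp
    have "1 + real m > 0" by simp
    then show ?thesis unfolding T_def using True pm by (simp add: fact_Suc divide_simps) (simp add: algebra_simps)
  next
    case False
    with \<open>\<not> 2 * m + 1 \<le> n\<close> have "n < 2 * m" by auto
    then show ?thesis unfolding T_def by simp
  qed
qed

definition G' :: "nat \<Rightarrow> real" where "G' n = (\<Sum>m\<le>n. T n m)"

lemma G_G': "G n = G' n"
proof -
  have "G' n = (\<Sum>m\<le>n div 2. T n m)"
    unfolding G'_def by (rule sum.mono_neutral_right) (auto simp: T_def)
  also have "\<dots> = G n" unfolding G_def by (rule sum.cong) (auto simp: T_def)
  finally show ?thesis by simp
qed

lemma T_0: "T n 0 = 1" by (simp add: T_def)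
lemma T_big: "n < 2 * m \<Longrightarrow> T n m = 0" by (simp add: T_def)

lemma G'_rec: "G' (Suc (Suc n)) = G' (Suc n) + 2 * real (Suc n) * G' n"
proof -
  have "G' (Suc (Suc n)) = T (Suc (Suc n)) 0 + (\<Sum>m\<le>Suc n. T (Suc (Suc n)) (Suc m))"
    unfolding G'_def by (rule sum.atMost_Suc_shift)
  also have "\<dots> = (T (Suc n) 0 + (\<Sum>m\<le>Suc n. T (Suc n) (Suc m))) + 2 * real (Suc n) * (\<Sum>m\<le>Suc n. T n m)"
    by (simp only: T_rec T_0 sum.distrib sum_distrib_left)
  also have "T (Suc n) 0 + (\<Sum>m\<le>Suc n. T (Suc n) (Suc m)) = G' (Suc n)"
    unfolding G'_def by (subst sum.atMost_Suc_shift) (simp add: T_big)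
  also have "(\<Sum>m\<le>Suc n. T n m) = G' n"
    unfolding G'_def by (simp add: T_big)
  finally show ?thesis .
qed

lemma hseq_G: "real (hseq n) = G n"
proof (induction n rule: hseq.induct)
  case 1 then show ?case by (simp add: G_def)
next
  case 2 then show ?case by (simp add: G_def)
next
  case (3 n) then show ?case by (simp add: G_G' G'_rec algebra_simps)
qed



definition e :: "nat \<Rightarrow> real" where
  "e k = (if even k then fact k / fact (k div 2) else 0)"

lemma moment_k: "has_bochner_integral lborel (\<lambda>x. normal_density 1 (sqrt 2) x * (x - 1) ^ k) (e k)"
proof (cases "even k")
  case True
  then obtain j where k: "k = 2 * j" by blast
  have "has_bochner_integral lborel (\<lambda>x. normal_density 1 (sqrt 2) x * (x - 1) ^ (2 * j))
     (fact (2 * j) / ((2 / (sqrt 2)\<^sup>2)^j * fact j))"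
    by (rule normal_moment_even) simp
  then show ?thesis using k by (simp add: e_def)
next
  case False
  then obtain j where k: "k = 2 * j + 1" using oddE by blast
  have "has_bochner_integral lborel (\<lambda>x. normal_density 1 (sqrt 2) x * (x - 1) ^ (2 * j + 1)) 0"
    by (rule normal_moment_odd) simp
  then show ?thesis using k by (simp add: e_def)
qed

lemma moment_n: "has_bochner_integral lborel (\<lambda>x. normal_density 1 (sqrt 2) x * x ^ n)
   (\<Sum>k\<le>n. real (n choose k) * e k)"
proof -
  have "has_bochner_integral lborel (\<lambda>x. \<Sum>k\<le>n. real (n choose k) * (normal_density 1 (sqrt 2) x * (x - 1) ^ k))
   (\<Sum>k\<le>n. real (n choose k) * e k)"
    by (intro has_bochner_integral_sum has_bochner_integral_mult_right moment_k)
  moreover have "(\<lambda>x. \<Sum>k\<le>n. real (n choose k) * (normal_density 1 (sqrt 2) x * (x - 1) ^ k))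
     = (\<lambda>x. normal_density 1 (sqrt 2) x * x ^ n)"
  proof
    fix x :: real
    have "x ^ n = ((x - 1) + 1) ^ n" by simp
    also have "\<dots> = (\<Sum>k\<le>n. real (n choose k) * (x - 1) ^ k)"
      by (subst binomial_ring) simp
    finally show "(\<Sum>k\<le>n. real (n choose k) * (normal_density 1 (sqrt 2) x * (x - 1) ^ k))
     = normal_density 1 (sqrt 2) x * x ^ n"
      by (simp add: sum_distrib_left algebra_simps)
  qed
  ultimately show ?thesis by simp
qed

lemma sum_e: "(\<Sum>k\<le>n. real (n choose k) * e k) = G n"
proof -
  have "(\<Sum>k\<le>n. real (n choose k) * e k) = (\<Sum>k\<in>(\<lambda>m. 2 * m) ` {..n div 2}. real (n choose k) * e k)"
    by (rule sum.mono_neutral_right) (auto simp: e_def elim!: evenE)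
  also have "\<dots> = (\<Sum>m\<le>n div 2. real (n choose (2 * m)) * e (2 * m))"
    by (subst sum.reindex) (auto simp: inj_on_def)
  also have "\<dots> = G n" unfolding G_def
  proof (rule sum.cong[OF refl])
    fix m assume "m \<in> {..n div 2}"
    hence h: "2 * m \<le> n" by auto
    show "real (n choose (2 * m)) * e (2 * m) = fact n / (fact m * fact (n - 2 * m))"
      using h by (simp add: binomial_fact e_def)
  qed
  finally show ?thesis .
qed

lemma integral_part: "((\<lambda>x::real. 1 / (2 * sqrt pi) * (x ^ n * exp (- (x - 1)\<^sup>2 / 4)))
           has_integral G n) UNIV"
proof -
  have eq: "(\<lambda>x::real. 1 / (2 * sqrt pi) * (x ^ n * exp (- (x - 1)\<^sup>2 / 4))) =
     (\<lambda>x. normal_density 1 (sqrt 2) x * x ^ n)"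
  proof
    fix x :: real
    have "sqrt (2 * pi * (sqrt 2)\<^sup>2) = 2 * sqrt pi"
      by (simp add: real_sqrt_mult)
    then show "1 / (2 * sqrt pi) * (x ^ n * exp (- (x - 1)\<^sup>2 / 4)) = normal_density 1 (sqrt 2) x * x ^ n"
      by (simp add: normal_density_def)
  qed
  have "integrable lborel (\<lambda>x. normal_density 1 (sqrt 2) x * x ^ n)"
    by (rule integrable.intros[OF moment_n])
  from has_integral_integral_lborel[OF this] show ?thesis
    unfolding eq using has_bochner_integral_integral_eq[OF moment_n] sum_e by simp
qed


theorem lemma3p6:
  fixes n :: nat and a :: "nat \<Rightarrow> complex"
  assumes "weyl_eq
     (\<Sum>k\<le>n. fscale (a k) (word (replicate k Q @ replicate n P @ replicate (n - k) Q)))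
     (peval (hermite n) weyl_z)"
  shows "a n = of_nat (hseq n) / (2 ^ n * fact n) \<and>
         ((\<lambda>x::real. 1 / (2 * sqrt pi) * (x ^ n * exp (- (x - 1)\<^sup>2 / 4)))
           has_integral real (hseq n)) UNIV"
proof
  have "(of_nat (hseq n) :: complex) = of_real (G n)"
    using hseq_G[of n] by (metis of_real_of_nat_eq)
  then show "a n = of_nat (hseq n) / (2 ^ n * fact n)"
    using a_n_G[OF assms] by simp
  show "((\<lambda>x::real. 1 / (2 * sqrt pi) * (x ^ n * exp (- (x - 1)\<^sup>2 / 4)))
           has_integral real (hseq n)) UNIV"
    using integral_part[of n] hseq_G[of n] by simp
qed

end
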